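(* Let $G$ be a graph, let $G'$ be a 2-connected bipartite subgraph of $G$, and let $B$ be a 2-connected subgraph of $G$ that contains $G'$ as a subgraph. If $B$ is not bipartite, then $B$ contains a bad path for $G'$.
   Context: Since $G'$ is connected and bipartite, its bipartition into two parts is unique. A path $P_{uv}$ in $G$ with endpoints $u,v$ is a bad path for $G'$ if $u,v\in V(G')$, all other vertices of $P_{uv}$ lie in $V(G)\setminus V(G')$, and at least one of the following holds: (a) $u,v$ are in the same part of $G'$ and $P_{uv}$ has odd length (number of edges); (b) $u,v$ are in different parts of $G'$ and $P_{uv}$ has even length. *)

theory Defs
  imports Main
begin

type_synonym 'a graph = "'a set \<times> 'a set set"

definition verts :: "'a graph \<Rightarrow> 'a set" where "verts G = fst G"
definition edges :: "'a graph \<Rightarrow> 'a set set" where "edges G = snd G"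

definition is_graph :: "'a graph \<Rightarrow> bool" where
  "is_graph G \<longleftrightarrow> finite (verts G) \<and>
     (\<forall>e\<in>edges G. \<exists>u v. u \<noteq> v \<and> e = {u, v} \<and> u \<in> verts G \<and> v \<in> verts G)"

definition subgraph :: "'a graph \<Rightarrow> 'a graph \<Rightarrow> bool" where
  "subgraph H G \<longleftrightarrow> is_graph H \<and> is_graph G \<and> verts H \<subseteq> verts G \<and> edges H \<subseteq> edges G"

text \<open>A path in G, given as its (nonempty, distinct) vertex sequence; its length is the
  number of edges, i.e. length xs - 1.\<close>
definition is_path :: "'a graph \<Rightarrow> 'a list \<Rightarrow> bool" where
  "is_path G xs \<longleftrightarrow> xs \<noteq> [] \<and> distinct xs \<and> set xs \<subseteq> verts G \<and>
     (\<forall>i. Suc i < length xs \<longrightarrow> {xs ! i, xs ! Suc i} \<in> edges G)"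

definition connected_graph :: "'a graph \<Rightarrow> bool" where
  "connected_graph G \<longleftrightarrow> verts G \<noteq> {} \<and>
     (\<forall>u\<in>verts G. \<forall>v\<in>verts G. \<exists>xs. is_path G xs \<and> hd xs = u \<and> last xs = v)"

definition delete_vertex :: "'a graph \<Rightarrow> 'a \<Rightarrow> 'a graph" where
  "delete_vertex G x = (verts G - {x}, {e\<in>edges G. x \<notin> e})"

definition two_connected :: "'a graph \<Rightarrow> bool" where
  "two_connected G \<longleftrightarrow> is_graph G \<and> card (verts G) \<ge> 3 \<and> connected_graph G \<and>
     (\<forall>x\<in>verts G. connected_graph (delete_vertex G x))"

definition proper_2col :: "'a graph \<Rightarrow> ('a \<Rightarrow> bool) \<Rightarrow> bool" where
  "proper_2col G c \<longleftrightarrow> (\<forall>u v. {u, v} \<in> edges G \<longrightarrow> c u \<noteq> c v)"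

definition bipartite :: "'a graph \<Rightarrow> bool" where
  "bipartite G \<longleftrightarrow> (\<exists>c. proper_2col G c)"

text \<open>u and v lie in the same part of the (unique, for connected G') bipartition of G'.\<close>
definition same_part :: "'a graph \<Rightarrow> 'a \<Rightarrow> 'a \<Rightarrow> bool" where
  "same_part G' u v \<longleftrightarrow> (\<forall>c. proper_2col G' c \<longrightarrow> c u = c v)"

definition bad_path :: "'a graph \<Rightarrow> 'a list \<Rightarrow> bool" where
  "bad_path G' xs \<longleftrightarrow> xs \<noteq> [] \<and> hd xs \<in> verts G' \<and> last xs \<in> verts G' \<and>
     (\<forall>i. 0 < i \<and> Suc i < length xs \<longrightarrow> xs ! i \<notin> verts G') \<and>
     ((same_part G' (hd xs) (last xs) \<and> odd (length xs - 1)) \<or>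
      (\<not> same_part G' (hd xs) (last xs) \<and> even (length xs - 1)))"

end

theory Submission
  imports Defs
begin

lemma path_iff: "is_path B xs \<longleftrightarrow> xs \<noteq> [] \<and> distinct xs \<and> set xs \<subseteq> verts B \<and>
   successively (\<lambda>a b. {a,b} \<in> edges B) xs"
  by (simp add: is_path_def successively_conv_nth)

lemma path_rev: "is_path B xs \<Longrightarrow> is_path B (rev xs)"
  by (simp add: path_iff insert_commute)

lemma succ_rev: "successively (\<lambda>a b. {a,b} \<in> E) xs \<Longrightarrow> successively (\<lambda>a b. {a,b} \<in> E) (rev xs)"
  unfolding successively_rev by (erule successively_mono) (simp add: insert_commute)

lemma path_Cons: "is_path B (x # xs) \<Longrightarrow> xs \<noteq> [] \<Longrightarrow> is_path B xs"
  by (simp add: path_iff successively_Cons)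

lemma path_ConsI: "is_path B xs \<Longrightarrow> x \<notin> set xs \<Longrightarrow> x \<in> verts B \<Longrightarrow> {x, hd xs} \<in> edges B
   \<Longrightarrow> is_path B (x # xs)"
  by (simp add: path_iff successively_Cons)

lemma interior_iff:
  assumes "distinct xs" "xs \<noteq> []"
  shows "(\<forall>i. 0<i \<and> Suc i < length xs \<longrightarrow> xs!i \<notin> W) \<longleftrightarrow> (\<forall>x\<in>set xs. x \<in> W \<longrightarrow> x = hd xs \<or> x = last xs)"
proof
  assume H: "\<forall>i. 0<i \<and> Suc i < length xs \<longrightarrow> xs!i \<notin> W"
  show "\<forall>x\<in>set xs. x \<in> W \<longrightarrow> x = hd xs \<or> x = last xs"
  proof (intro ballI impI)
    fix x assume "x \<in> set xs" "x \<in> W"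
    then obtain i where i: "i < length xs" "xs ! i = x" by (auto simp: in_set_conv_nth)
    show "x = hd xs \<or> x = last xs"
    proof (cases "i = 0")
      case True thus ?thesis using i assms by (simp add: hd_conv_nth)
    next
      case False
      show ?thesis
      proof (cases "Suc i = length xs")
        case True
        then have "i = length xs - 1" by simp
        thus ?thesis using i assms by (simp add: last_conv_nth)
      next
        case F2: False
        thus ?thesis using H False i \<open>x \<in> W\<close> by auto
      qed
    qed
  qed
next
  assume H: "\<forall>x\<in>set xs. x \<in> W \<longrightarrow> x = hd xs \<or> x = last xs"
  show "\<forall>i. 0<i \<and> Suc i < length xs \<longrightarrow> xs!i \<notin> W"
  proof (intro allI impI notI)
    fix i assume i: "0<i \<and> Suc i < length xs" and "xs ! i \<in> W"
    then have "xs ! i = xs ! 0 \<or> xs ! i = xs ! (length xs - 1)"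
      using H assms by (auto simp: hd_conv_nth last_conv_nth)
    moreover have a: "i < length xs" "0 < length xs" "length xs - 1 < length xs" using i by auto
    moreover have "xs ! i \<noteq> xs ! 0" using nth_eq_iff_index_eq[OF assms(1) a(1) a(2)] i by simp
    moreover have "xs ! i \<noteq> xs ! (length xs - 1)"
    proof
      assume "xs ! i = xs ! (length xs - 1)"
      hence "i = length xs - 1" using nth_eq_iff_index_eq[OF assms(1) a(1) a(3)] by blast
      thus False using conjunct2[OF i] by linarith
    qed
    ultimately show False by blast
  qed
qed

lemma first_hit:
  "is_path B xs \<Longrightarrow> last xs \<in> W \<Longrightarrow> \<exists>ys. is_path B ys \<and> hd ys = hd xs \<and> last ys \<in> W \<and>
     set ys \<subseteq> set xs \<and> (\<forall>x\<in>set ys. x \<in> W \<longrightarrow> x = last ys)"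
proof (induction xs)
  case Nil thus ?case by (simp add: is_path_def)
next
  case (Cons x rest)
  show ?case
  proof (cases "x \<in> W")
    case True
    have "is_path B [x]" using Cons.prems(1) by (simp add: path_iff)
    then show ?thesis using True by (intro exI[of _ "[x]"]) simp
  next
    case False
    then have ne: "rest \<noteq> []" using Cons.prems by auto
    then have p: "is_path B rest" using path_Cons[OF Cons.prems(1)] by blast
    have "last rest \<in> W" using Cons.prems(2) ne by simp
    then obtain ys where ys: "is_path B ys" "hd ys = hd rest" "last ys \<in> W" "set ys \<subseteq> set rest"
      "\<forall>x\<in>set ys. x \<in> W \<longrightarrow> x = last ys"
      using Cons.IH[OF p] by blast
    have yne: "ys \<noteq> []" using ys(1) by (simp add: is_path_def)
    have d: "distinct (x # rest)" "x \<in> verts B" using Cons.prems(1) by (auto simp: path_iff)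
    have e: "{x, hd rest} \<in> edges B" using Cons.prems(1) ne
      by (cases rest) (auto simp: path_iff)
    have "is_path B (x # ys)"
      apply (rule path_ConsI[OF ys(1)])
      using d ys(4) apply auto[1]
      using d apply simp
      using e ys(2) by simp
    moreover have "\<forall>z\<in>set (x # ys). z \<in> W \<longrightarrow> z = last (x # ys)"
      using ys(5) False yne by simp
    ultimately show ?thesis using ys yne by (intro exI[of _ "x # ys"]) auto
  qed
qed

lemma path_delete: "is_path (delete_vertex B u) xs \<Longrightarrow> is_path B xs \<and> u \<notin> set xs"
  unfolding is_path_def delete_vertex_def verts_def edges_def by auto

definition wpath :: "'a graph \<Rightarrow> 'a set \<Rightarrow> 'a list \<Rightarrow> bool" where
  "wpath B W xs \<longleftrightarrow> is_path B xs \<and> hd xs \<in> W \<and> last xs \<in> W \<and>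
     (\<forall>x\<in>set xs. x \<in> W \<longrightarrow> x = hd xs \<or> x = last xs)"

definition pc :: "('a \<Rightarrow> bool) \<Rightarrow> 'a list \<Rightarrow> bool" where
  "pc col xs \<longleftrightarrow> (col (hd xs) = col (last xs) \<longleftrightarrow> even (length xs - 1))"

definition consistent :: "'a graph \<Rightarrow> 'a set \<Rightarrow> ('a \<Rightarrow> bool) \<Rightarrow> bool" where
  "consistent B W col \<longleftrightarrow> (\<forall>xs. wpath B W xs \<longrightarrow> pc col xs)"

lemma ear:
  assumes tc: "two_connected B" and W: "W \<subseteq> verts B" and ab: "a \<in> W" "b \<in> W" "a \<noteq> b"
    and y: "y \<in> verts B" "y \<notin> W"
  shows "\<exists>P. wpath B W P \<and> hd P \<noteq> last P \<and> (\<exists>z\<in>set P. z \<notin> W)"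
proof -
  have conn: "connected_graph B" and del: "\<forall>x\<in>verts B. connected_graph (delete_vertex B x)"
    using tc by (auto simp: two_connected_def)
  obtain xs where xs: "is_path B xs" "hd xs = y" "last xs = a"
    using conn y ab W unfolding connected_graph_def by blast
  have "last xs \<in> W" using xs ab by simp
  from first_hit[OF xs(1) this] obtain P1 where P10: "is_path B P1" "hd P1 = hd xs" "last P1 \<in> W"
    "set P1 \<subseteq> set xs" "\<forall>x\<in>set P1. x \<in> W \<longrightarrow> x = last P1"
    by blast
  have P1: "is_path B P1" "hd P1 = y" "last P1 \<in> W"
    "set P1 \<subseteq> set xs" "\<forall>x\<in>set P1. x \<in> W \<longrightarrow> x = last P1" using P10 xs(2) by auto
  define u where "u = last P1"
  obtain w where w: "w \<in> W" "w \<noteq> u" using ab by blast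
  have cu: "connected_graph (delete_vertex B u)" using del P1(3) W u_def by auto
  have yu: "y \<noteq> u" using y P1(3) u_def by auto
  have "y \<in> verts (delete_vertex B u)" "w \<in> verts (delete_vertex B u)"
    using y yu w W by (auto simp: delete_vertex_def verts_def)
  then obtain xs2 where xs2: "is_path (delete_vertex B u) xs2" "hd xs2 = y" "last xs2 = w"
    using cu unfolding connected_graph_def by blast
  have xs2': "is_path B xs2" "u \<notin> set xs2" using path_delete[OF xs2(1)] by auto
  have "last xs2 \<in> W" using xs2 w by simp
  from first_hit[OF xs2'(1) this] obtain Q where Q0: "is_path B Q" "hd Q = hd xs2" "last Q \<in> W"
    "set Q \<subseteq> set xs2" "\<forall>x\<in>set Q. x \<in> W \<longrightarrow> x = last Q"
    by blast
  have Q: "is_path B Q" "hd Q = y" "last Q \<in> W"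
    "set Q \<subseteq> set xs2" "\<forall>x\<in>set Q. x \<in> W \<longrightarrow> x = last Q" using Q0 xs2(2) by auto
  define v where "v = last Q"
  have uQ: "u \<notin> set Q" using Q(4) xs2'(2) by auto
  have Qne: "Q \<noteq> []" and P1ne: "P1 \<noteq> []" using Q(1) P1(1) by (auto simp: is_path_def)
  have "\<exists>x\<in>set Q. x \<in> set P1" using Qne P1ne Q(2) P1(2) by (metis hd_in_set)
  then obtain q1 z q2 where qs: "Q = q1 @ z # q2" "z \<in> set P1" "\<forall>x\<in>set q2. x \<notin> set P1"
    using split_list_last_prop[of Q "\<lambda>x. x \<in> set P1"] by blast
  obtain p1 p2 where ps: "P1 = p1 @ z # p2" using qs(2) by (meson split_list)
  have zu: "z \<noteq> u" using uQ qs(1) by auto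
  then have p2ne: "p2 \<noteq> []" using ps u_def by auto
  have zW: "z \<notin> W" using P1(5) qs(2) zu u_def by auto
  have zv: "z \<noteq> v" using zW Q(3) v_def by auto
  then have q2ne: "q2 \<noteq> []" using qs(1) v_def by auto
  define P where "P = rev p2 @ z # q2"
  have dP1: "distinct P1" and dQ: "distinct Q" using P1(1) Q(1) by (auto simp: path_iff)
  have sP1: "successively (\<lambda>a b. {a,b} \<in> edges B) (z # p2)"
    using P1(1) ps by (simp add: path_iff successively_append_iff)
  have sQ: "successively (\<lambda>a b. {a,b} \<in> edges B) (z # q2)"
    using Q(1) qs(1) by (simp add: path_iff successively_append_iff)
  have sp2: "successively (\<lambda>a b. {a,b} \<in> edges B) p2" and ez: "{z, hd p2} \<in> edges B"
    using sP1 p2ne by (simp_all add: successively_Cons)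
  have r: "successively (\<lambda>a b. {a,b} \<in> edges B) (rev p2)" by (rule succ_rev[OF sp2])
  have j: "{last (rev p2), hd (z # q2)} \<in> edges B" using ez p2ne by (simp add: last_rev insert_commute)
  have sP: "successively (\<lambda>a b. {a,b} \<in> edges B) P"
    unfolding P_def successively_append_iff using r sQ j by blast
  have dP: "distinct P" unfolding P_def using dP1 dQ ps qs by auto
  have "set P \<subseteq> set P1 \<union> set Q" unfolding P_def using ps qs by auto
  moreover have "set P1 \<subseteq> verts B" "set Q \<subseteq> verts B" using P1(1) Q(1) by (simp_all add: path_iff)
  ultimately have setP: "set P \<subseteq> verts B" by blast
  have Pne: "P \<noteq> []" unfolding P_def by simp
  have pathP: "is_path B P" using sP dP setP Pne by (simp add: path_iff)
  have "hd P = last p2" unfolding P_def using p2ne by (simp add: hd_rev)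
  also have "\<dots> = u" unfolding u_def using ps p2ne by simp
  finally have hdP: "hd P = u" .
  have lastP: "last P = v" unfolding P_def v_def using qs q2ne by simp
  have uW: "u \<in> W" and vW: "v \<in> W" using P1(3) Q(3) u_def v_def by auto
  have int: "\<forall>x\<in>set P. x \<in> W \<longrightarrow> x = hd P \<or> x = last P"
  proof (intro ballI impI)
    fix x assume "x \<in> set P" "x \<in> W"
    then have "x \<in> set P1 \<or> x \<in> set Q" unfolding P_def using ps qs by auto
    then show "x = hd P \<or> x = last P"
    proof
      assume "x \<in> set P1" thus ?thesis using P1(5) \<open>x \<in> W\<close> hdP u_def by simp
    next
      assume "x \<in> set Q" thus ?thesis using Q(5) \<open>x \<in> W\<close> lastP v_def by simp
    qed
  qed
  have "wpath B W P" using pathP hdP lastP uW vW int by (simp add: wpath_def)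
  moreover have "v \<in> set Q" using Qne v_def by simp
  then have "hd P \<noteq> last P" using hdP lastP uQ by auto
  moreover have "z \<in> set P" unfolding P_def by simp
  ultimately show ?thesis using zW by blast
qed


definition ext_col :: "'a set \<Rightarrow> ('a \<Rightarrow> bool) \<Rightarrow> 'a list \<Rightarrow> 'a \<Rightarrow> bool" where
  "ext_col W col P x = (if x \<in> W then col x
     else (col (hd P) \<longleftrightarrow> even (length (takeWhile (\<lambda>y. y \<noteq> x) P))))"

lemma takeWhile_neq: "x \<notin> set as \<Longrightarrow> takeWhile (\<lambda>y. y \<noteq> x) (as @ x # bs) = as"
  by (induction as) auto

lemma hd_last_len: assumes "distinct xs" "xs \<noteq> []" "hd xs = last xs" shows "length xs = 1"
proof (cases xs)
  case Nil thus ?thesis using assms by simp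
next
  case (Cons x ys)
  show ?thesis
  proof (cases "ys = []")
    case True thus ?thesis using Cons by simp
  next
    case False
    then have "last ys \<in> set ys" by simp
    moreover have "x = last ys" using assms(3) Cons False by simp
    ultimately show ?thesis using assms(1) Cons by simp
  qed
qed

lemma wpath_rev: "wpath B W Q \<Longrightarrow> wpath B W (rev Q)"
proof -
  assume w: "wpath B W Q"
  then have ne: "Q \<noteq> []" by (simp add: wpath_def is_path_def)
  have "is_path B (rev Q)" using w by (simp add: wpath_def path_rev)
  then show ?thesis using w ne unfolding wpath_def by (auto simp: hd_rev last_rev)
qed

lemma pc_rev: "Q \<noteq> [] \<Longrightarrow> pc d (rev Q) \<Longrightarrow> pc d Q"
  unfolding pc_def by (auto simp: hd_rev last_rev)

lemma pos:
  assumes wp: "wpath B W P" and cons: "consistent B W col" and Pd: "P = as @ x # bs"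
  shows "ext_col W col P x = (col (hd P) \<longleftrightarrow> even (length as))"
proof -
  have dP: "distinct P" using wp by (simp add: wpath_def path_iff)
  then have xa: "x \<notin> set as" and xb: "x \<notin> set bs" using Pd by auto
  have tw: "takeWhile (\<lambda>y. y \<noteq> x) P = as" using Pd xa takeWhile_neq by simp
  show ?thesis
  proof (cases "x \<in> W")
    case False thus ?thesis using tw by (simp add: ext_col_def)
  next
    case True
    have "x \<in> set P" using Pd by simp
    then have "x = hd P \<or> x = last P" using wp True by (simp add: wpath_def)
    then show ?thesis
    proof
      assume h: "x = hd P"
      have "as = []"
      proof (rule ccontr)
        assume "as \<noteq> []"
        then have "hd P = hd as" "hd as \<in> set as" using Pd by auto
        then show False using h xa by simp
      qed
      then show ?thesis using True h by (simp add: ext_col_def)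
    next
      assume h: "x = last P"
      have "bs = []"
      proof (rule ccontr)
        assume "bs \<noteq> []"
        then have "last P = last bs" "last bs \<in> set bs" using Pd by auto
        then show False using h xb by simp
      qed
      have "pc col P" using cons wp by (simp add: consistent_def)
      then have A: "(col (hd P) = col (last P)) \<longleftrightarrow> even (length P - 1)" by (simp add: pc_def)
      have B: "length P - 1 = length as" using Pd \<open>bs = []\<close> by simp
      have "(col (hd P) = col x) \<longleftrightarrow> even (length as)" using A unfolding h B[symmetric] .
      then show ?thesis using True by (auto simp: ext_col_def)
    qed
  qed
qed

lemma case3:
  assumes wp: "wpath B W P" and cons: "consistent B W col"
    and wQ: "wpath B (W \<union> set P) Q" and h1: "hd Q \<in> set P" and h2: "hd Q \<notin> W"
    and h3: "last Q \<notin> set P"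
  shows "pc (ext_col W col P) Q"
proof -
  obtain as bs where Pd: "P = as @ hd Q # bs" using h1 by (meson split_list)
  have pP: "is_path B P" and pQ: "is_path B Q" using wp wQ by (simp_all add: wpath_def)
  have dP: "distinct P" and dQ: "distinct Q" and Qne: "Q \<noteq> []" and Pne: "P \<noteq> []"
    using pP pQ by (simp_all add: path_iff)
  have hPW: "hd P \<in> W" and lPW: "last P \<in> W" and intP: "\<forall>x\<in>set P. x \<in> W \<longrightarrow> x = hd P \<or> x = last P"
    using wp by (simp_all add: wpath_def)
  have intQ: "\<forall>x\<in>set Q. x \<in> W \<union> set P \<longrightarrow> x = hd Q \<or> x = last Q"
    using wQ by (simp add: wpath_def)
  have lQW: "last Q \<in> W" using wQ h3 by (simp add: wpath_def)
  have asne: "as \<noteq> []"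
  proof
    assume "as = []" then have "hd P = hd Q" using Pd by simp
    then show False using hPW h2 by simp
  qed
  have hdas: "hd as = hd P" using Pd asne by simp
  define R where "R = as @ Q"
  have hQa: "hd Q \<notin> set as" using dP Pd by simp
  have lQa: "last Q \<notin> set as" using h3 Pd by simp
  have disj: "set as \<inter> set Q = {}"
  proof (intro equalityI subsetI)
    fix x assume x: "x \<in> set as \<inter> set Q"
    then have "x \<in> set P" using Pd by simp
    then have "x = hd Q \<or> x = last Q" using intQ x by blast
    then show "x \<in> {}" using x hQa lQa by blast
  qed simp
  have sPf: "successively (\<lambda>a b. {a,b} \<in> edges B) P" using pP by (simp add: path_iff)
  then have sas: "successively (\<lambda>a b. {a,b} \<in> edges B) as" and jas: "{last as, hd Q} \<in> edges B"
    using Pd asne by (simp_all add: successively_append_iff)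
  have sQ: "successively (\<lambda>a b. {a,b} \<in> edges B) Q" using pQ by (simp add: path_iff)
  have sR: "successively (\<lambda>a b. {a,b} \<in> edges B) R"
    unfolding R_def successively_append_iff using sas sQ jas by blast
  have dR: "distinct R" unfolding R_def using dP Pd dQ disj by simp
  have "set R \<subseteq> verts B" unfolding R_def using pP pQ Pd by (auto simp: path_iff)
  then have pR: "is_path B R" using sR dR Qne by (simp add: path_iff R_def)
  have hR: "hd R = hd P" unfolding R_def using asne hdas by simp
  have lR: "last R = last Q" unfolding R_def using Qne by simp
  have lPa: "last P \<notin> set as"
  proof -
    have "last P \<in> set (hd Q # bs)" using Pd by (simp add: last_append)
    then show ?thesis using dP Pd by auto
  qed
  have intR: "\<forall>x\<in>set R. x \<in> W \<longrightarrow> x = hd R \<or> x = last R"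
  proof (intro ballI impI)
    fix x assume x: "x \<in> set R" "x \<in> W"
    then have "x \<in> set as \<or> x \<in> set Q" unfolding R_def by simp
    then show "x = hd R \<or> x = last R"
    proof
      assume xa: "x \<in> set as"
      then have "x \<in> set P" using Pd by simp
      then have "x = hd P \<or> x = last P" using intP x(2) by blast
      then show ?thesis using xa lPa hR by auto
    next
      assume xq: "x \<in> set Q"
      then have "x = hd Q \<or> x = last Q" using intQ x(2) by blast
      then show ?thesis using h2 x(2) lR by auto
    qed
  qed
  have "wpath B W R" using pR hR lR hPW lQW intR by (simp add: wpath_def)
  then have pcR: "pc col R" using cons by (simp add: consistent_def)
  have lenR: "length R = length as + length Q" unfolding R_def by simp
  have d1: "ext_col W col P (hd Q) = (col (hd P) \<longleftrightarrow> even (length as))" by (rule pos[OF wp cons Pd])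
  have d2: "ext_col W col P (last Q) = col (last Q)" using lQW by (simp add: ext_col_def)
  have L1: "length Q \<ge> 1" using Qne by (cases Q) auto
  have ar: "length as + length Q - 1 = length as + (length Q - 1)" using L1 by simp
  have "(col (hd P) = col (last Q)) \<longleftrightarrow> (even (length as) \<longleftrightarrow> even (length Q - 1))"
    using pcR hR lR lenR ar Qne by (simp add: pc_def)
  then show ?thesis unfolding pc_def d1 d2 by blast
qed


lemma case2:
  assumes wp: "wpath B W P" and cons: "consistent B W col"
    and wQ: "wpath B (W \<union> set P) Q" and Pd: "P = as @ hd Q # ms @ last Q # bs"
  shows "pc (ext_col W col P) Q"
proof -
  have pP: "is_path B P" and pQ: "is_path B Q" using wp wQ by (simp_all add: wpath_def)
  have dP: "distinct P" and dQ: "distinct Q" and Qne: "Q \<noteq> []" and Pne: "P \<noteq> []"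
    using pP pQ by (simp_all add: path_iff)
  have hPW: "hd P \<in> W" and lPW: "last P \<in> W" and intP: "\<forall>x\<in>set P. x \<in> W \<longrightarrow> x = hd P \<or> x = last P"
    using wp by (simp_all add: wpath_def)
  have intQ: "\<forall>x\<in>set Q. x \<in> W \<union> set P \<longrightarrow> x = hd Q \<or> x = last Q"
    using wQ by (simp add: wpath_def)
  have dd: "distinct as" "distinct ms" "distinct bs" "hd Q \<notin> set as" "hd Q \<notin> set ms" "hd Q \<notin> set bs"
    "last Q \<notin> set as" "last Q \<notin> set ms" "last Q \<notin> set bs" "hd Q \<noteq> last Q"
    "set as \<inter> set ms = {}" "set as \<inter> set bs = {}" "set ms \<inter> set bs = {}"
    using dP unfolding Pd by auto
  have hP: "hd P = (if as = [] then hd Q else hd as)" using Pd by simp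
  have lP: "last P = (if bs = [] then last Q else last bs)" using Pd by (simp add: last_append)
  have hPin: "hd P \<in> set as \<union> {hd Q}" using hP by auto
  have lPin: "last P \<in> set bs \<union> {last Q}" using lP by auto
  define R where "R = as @ Q @ bs"
  have disj1: "set as \<inter> set Q = {}"
  proof (intro equalityI subsetI)
    fix x assume x: "x \<in> set as \<inter> set Q"
    then have "x \<in> set P" using Pd by simp
    then have "x = hd Q \<or> x = last Q" using intQ x by blast
    then show "x \<in> {}" using x dd by auto
  qed simp
  have disj2: "set bs \<inter> set Q = {}"
  proof (intro equalityI subsetI)
    fix x assume x: "x \<in> set bs \<inter> set Q"
    then have "x \<in> set P" using Pd by simp
    then have "x = hd Q \<or> x = last Q" using intQ x by blast
    then show "x \<in> {}" using x dd by auto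
  qed simp
  have sPf: "successively (\<lambda>a b. {a,b} \<in> edges B) P" using pP by (simp add: path_iff)
  have j1: "as \<noteq> [] \<Longrightarrow> {last as, hd Q} \<in> edges B"
    using sPf unfolding Pd by (simp add: successively_append_iff)
  have sas: "successively (\<lambda>a b. {a,b} \<in> edges B) as"
    using sPf unfolding Pd by (simp add: successively_append_iff)
  have "successively (\<lambda>a b. {a,b} \<in> edges B) ((hd Q # ms) @ (last Q # bs))"
    using sPf unfolding Pd by (simp add: successively_append_iff)
  then have s2: "successively (\<lambda>a b. {a,b} \<in> edges B) (last Q # bs)"
    by (simp only: successively_append_iff)
  then have j2: "bs \<noteq> [] \<Longrightarrow> {last Q, hd bs} \<in> edges B" by (simp add: successively_Cons)
  have sbs: "successively (\<lambda>a b. {a,b} \<in> edges B) bs" using s2 by (cases bs) simp_all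
  have sQ: "successively (\<lambda>a b. {a,b} \<in> edges B) Q" using pQ by (simp add: path_iff)
  have sQb: "successively (\<lambda>a b. {a,b} \<in> edges B) (Q @ bs)"
    unfolding successively_append_iff using sQ sbs j2 by blast
  have sR: "successively (\<lambda>a b. {a,b} \<in> edges B) R"
    unfolding R_def successively_append_iff[of _ as] using sas sQb j1 Qne by auto
  have dR: "distinct R" unfolding R_def using dd dQ disj1 disj2 by auto
  have "set R \<subseteq> verts B" unfolding R_def using pP pQ Pd by (auto simp: path_iff)
  then have pR: "is_path B R" using sR dR Qne by (simp add: path_iff R_def)
  have hR: "hd R = hd P" unfolding R_def using hP Qne by simp
  have lR: "last R = last P" unfolding R_def using lP Qne by (simp add: last_append)
  have intR: "\<forall>x\<in>set R. x \<in> W \<longrightarrow> x = hd R \<or> x = last R"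
  proof (intro ballI impI)
    fix x assume x: "x \<in> set R" "x \<in> W"
    then have "x \<in> set as \<or> x \<in> set Q \<or> x \<in> set bs" unfolding R_def by simp
    then show "x = hd R \<or> x = last R"
    proof (elim disjE)
      assume xa: "x \<in> set as"
      then have "x \<in> set P" using Pd by simp
      then have "x = hd P \<or> x = last P" using intP x(2) by blast
      moreover have "x \<noteq> last P" using lPin xa dd by auto
      ultimately show ?thesis using hR by auto
    next
      assume xb: "x \<in> set bs"
      then have "x \<in> set P" using Pd by simp
      then have "x = hd P \<or> x = last P" using intP x(2) by blast
      moreover have "x \<noteq> hd P" using hPin xb dd by auto
      ultimately show ?thesis using lR by auto
    next
      assume xq: "x \<in> set Q"
      then have "x = hd Q \<or> x = last Q" using intQ x(2) by blast
      then show ?thesis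
      proof
        assume xh: "x = hd Q"
        then have "x \<in> set P" using Pd by simp
        then have "x = hd P \<or> x = last P" using intP x(2) by blast
        moreover have "x \<noteq> last P" using lPin xh dd by auto
        ultimately show ?thesis using hR by auto
      next
        assume xl: "x = last Q"
        then have "x \<in> set P" using Pd by simp
        then have "x = hd P \<or> x = last P" using intP x(2) by blast
        moreover have "x \<noteq> hd P" using hPin xl dd by auto
        ultimately show ?thesis using lR by auto
      qed
    qed
  qed
  have "wpath B W R" using pR hR lR hPW lPW intR by (simp add: wpath_def)
  then have pcR: "pc col R" using cons by (simp add: consistent_def)
  have pcP: "pc col P" using cons wp by (simp add: consistent_def)
  have d1: "ext_col W col P (hd Q) = (col (hd P) \<longleftrightarrow> even (length as))" by (rule pos[OF wp cons Pd])
  have Pd2: "P = (as @ hd Q # ms) @ last Q # bs" using Pd by simp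
  have d2: "ext_col W col P (last Q) = (col (hd P) \<longleftrightarrow> even (length (as @ hd Q # ms)))"
    by (rule pos[OF wp cons Pd2])
  have L1: "length Q \<ge> 1" using Qne by (cases Q) auto
  have lenR: "length R - 1 = length as + length bs + (length Q - 1)" unfolding R_def using L1 by simp
  have lenP: "length P - 1 = length as + length bs + Suc (length ms)" unfolding Pd by simp
  have e1: "(col (hd P) = col (last P)) \<longleftrightarrow> even (length as + length bs + (length Q - 1))"
    using pcR unfolding pc_def hR lR lenR .
  have e2: "(col (hd P) = col (last P)) \<longleftrightarrow> even (length as + length bs + Suc (length ms))"
    using pcP unfolding pc_def lenP .
  have e3: "even (length Q - 1) \<longleftrightarrow> even (Suc (length ms))" using e1 e2 Qne by auto
  have "length (as @ hd Q # ms) = length as + Suc (length ms)" by simp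
  then show ?thesis unfolding pc_def d1 d2 using e3 by auto
qed


lemma extend:
  assumes wp: "wpath B W P" and cons: "consistent B W col"
  shows "consistent B (W \<union> set P) (ext_col W col P)"
  unfolding consistent_def
proof (intro allI impI)
  fix Q assume wQ: "wpath B (W \<union> set P) Q"
  let ?d = "ext_col W col P"
  have pQ: "is_path B Q" using wQ by (simp add: wpath_def)
  have dQ: "distinct Q" and Qne: "Q \<noteq> []" using pQ by (simp_all add: path_iff)
  have hW': "hd Q \<in> W \<union> set P" and lW': "last Q \<in> W \<union> set P"
    and intQ: "\<forall>x\<in>set Q. x \<in> W \<union> set P \<longrightarrow> x = hd Q \<or> x = last Q"
    using wQ by (simp_all add: wpath_def)
  have wQr: "wpath B (W \<union> set P) (rev Q)" by (rule wpath_rev[OF wQ])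
  have hr: "hd (rev Q) = last Q" and lr: "last (rev Q) = hd Q" using Qne by (simp_all add: hd_rev last_rev)
  have dP: "distinct P" using wp by (simp add: wpath_def path_iff)
  show "pc ?d Q"
  proof (cases "hd Q = last Q")
    case True
    then have "length Q = 1" using hd_last_len dQ Qne by blast
    then show ?thesis using True by (simp add: pc_def)
  next
    case hl: False
    show ?thesis
    proof (cases "hd Q \<in> W \<and> last Q \<in> W")
      case True
      have "wpath B W Q" using pQ True intQ by (auto simp: wpath_def)
      then have "pc col Q" using cons by (simp add: consistent_def)
      then show ?thesis using True by (simp add: pc_def ext_col_def)
    next
      case nW: False
      show ?thesis
      proof (cases "hd Q \<in> set P")
        case hP: True
        show ?thesis
        proof (cases "last Q \<in> set P")
          case lP: True
          obtain as rest where Pd: "P = as @ hd Q # rest" using hP by (meson split_list)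
          have "last Q \<in> set as \<or> last Q \<in> set rest" using lP hl Pd by auto
          then show ?thesis
          proof
            assume "last Q \<in> set rest"
            then obtain ms bs where "rest = ms @ last Q # bs" by (meson split_list)
            then show ?thesis using case2[OF wp cons wQ] Pd by simp
          next
            assume "last Q \<in> set as"
            then obtain as1 ms where "as = as1 @ last Q # ms" by (meson split_list)
            then have "P = as1 @ hd (rev Q) # ms @ last (rev Q) # rest" using Pd hr lr by simp
            then have "pc ?d (rev Q)" by (rule case2[OF wp cons wQr])
            then show ?thesis using pc_rev Qne by blast
          qed
        next
          case lP: False
          have "hd Q \<notin> W" using nW lP lW' by auto
          then show ?thesis using case3[OF wp cons wQ hP _ lP] by blast
        qed
      next
        case hP: False
        then have hW: "hd Q \<in> W" using hW' by auto
        then have lP: "last Q \<in> set P" using nW lW' by auto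
        have lW: "last Q \<notin> W" using nW hW by auto
        have "pc ?d (rev Q)" using case3[OF wp cons wQr] hr lr lP lW hP by simp
        then show ?thesis using pc_rev Qne by blast
      qed
    qed
  qed
qed

lemma main_ind:
  "two_connected B \<Longrightarrow> W \<subseteq> verts B \<Longrightarrow> a \<in> W \<Longrightarrow> b \<in> W \<Longrightarrow> a \<noteq> b \<Longrightarrow> consistent B W col
   \<Longrightarrow> \<exists>d. (\<forall>x\<in>W. d x = col x) \<and> proper_2col B d"
proof (induction "card (verts B - W)" arbitrary: W col rule: less_induct)
  case less
  have ig: "is_graph B" using less.prems(1) by (simp add: two_connected_def)
  then have fin: "finite (verts B)" by (simp add: is_graph_def)
  show ?case
  proof (cases "verts B - W = {}")
    case True
    have "proper_2col B col" unfolding proper_2col_def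
    proof (intro allI impI)
      fix u v assume e: "{u, v} \<in> edges B"
      then obtain p q where pq: "p \<noteq> q" "{u,v} = {p,q}" "p \<in> verts B" "q \<in> verts B"
        using ig unfolding is_graph_def by blast
      then have uv: "u \<noteq> v" "u \<in> verts B" "v \<in> verts B" by (auto simp: doubleton_eq_iff)
      have "is_path B [u, v]" using uv e by (simp add: path_iff)
      then have "wpath B W [u, v]" using True uv by (auto simp: wpath_def)
      then have "pc col [u, v]" using less.prems(6) by (simp add: consistent_def)
      then show "col u \<noteq> col v" by (simp add: pc_def)
    qed
    then show ?thesis by blast
  next
    case False
    then obtain y where y: "y \<in> verts B" "y \<notin> W" by blast
    obtain P where P: "wpath B W P" "hd P \<noteq> last P" "\<exists>z\<in>set P. z \<notin> W"
      using ear[OF less.prems(1) less.prems(2) less.prems(3) less.prems(4) less.prems(5) y] by blast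
    obtain z where z: "z \<in> set P" "z \<notin> W" using P(3) by blast
    have sPv: "set P \<subseteq> verts B" using P(1) by (simp add: wpath_def path_iff)
    have sub: "verts B - (W \<union> set P) \<subset> verts B - W" using z sPv by blast
    have lt: "card (verts B - (W \<union> set P)) < card (verts B - W)"
      by (rule psubset_card_mono[OF _ sub]) (simp add: fin)
    have c2: "consistent B (W \<union> set P) (ext_col W col P)" by (rule extend[OF P(1) less.prems(6)])
    obtain d where d: "\<forall>x\<in>W \<union> set P. d x = ext_col W col P x" "proper_2col B d"
      using less.hyps[OF lt less.prems(1) _ _ _ less.prems(5) c2] less.prems(2,3,4) sPv by blast
    have "\<forall>x\<in>W. d x = col x" using d(1) by (simp add: ext_col_def)
    then show ?thesis using d(2) by blast
  qed
qed

lemma alt: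
  "proper_2col G c \<Longrightarrow> successively (\<lambda>a b. {a,b} \<in> edges G) xs \<Longrightarrow> xs \<noteq> []
   \<Longrightarrow> (c (hd xs) = c (last xs) \<longleftrightarrow> even (length xs - 1))"
proof (induction xs)
  case Nil thus ?case by simp
next
  case (Cons x rest)
  show ?case
  proof (cases "rest = []")
    case True thus ?thesis by simp
  next
    case False
    have e: "{x, hd rest} \<in> edges G" and s: "successively (\<lambda>a b. {a,b} \<in> edges G) rest"
      using Cons.prems(2) False by (simp_all add: successively_Cons)
    have cx: "c x \<noteq> c (hd rest)" using Cons.prems(1) e by (simp add: proper_2col_def)
    have IH: "c (hd rest) = c (last rest) \<longleftrightarrow> even (length rest - 1)" using Cons.IH[OF Cons.prems(1) s False] .
    have L: "length rest = Suc (length rest - 1)" using False by (cases rest) auto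
    have "c x = c (last rest) \<longleftrightarrow> even (length rest)"
      using cx IH L by (metis even_Suc)
    then show ?thesis using False by simp
  qed
qed


theorem lemma3p5:
  fixes G G' B :: "'a graph"
  assumes "is_graph G"
    and "subgraph G' G" and "two_connected G'" and "bipartite G'"
    and "subgraph B G" and "two_connected B" and "subgraph G' B"
    and "\<not> bipartite B"
  shows "\<exists>xs. is_path B xs \<and> bad_path G' xs"
proof (rule ccontr)
  assume nb: "\<not> (\<exists>xs. is_path B xs \<and> bad_path G' xs)"
  obtain c where c: "proper_2col G' c" using assms(4) by (auto simp: bipartite_def)
  define W where "W = verts G'"
  have WB: "W \<subseteq> verts B" using assms(7) by (simp add: subgraph_def W_def)
  have igG': "is_graph G'" and card3: "card W \<ge> 3" and connG': "connected_graph G'"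
    using assms(3) by (simp_all add: two_connected_def W_def)
  have finW: "finite W" using igG' by (simp add: is_graph_def W_def)
  have sp: "same_part G' x y \<longleftrightarrow> c x = c y" if xy: "x \<in> W" "y \<in> W" for x y
  proof
    assume "same_part G' x y" then show "c x = c y" using c by (simp add: same_part_def)
  next
    assume cxy: "c x = c y"
    obtain xs where xs: "is_path G' xs" "hd xs = x" "last xs = y"
      using connG' xy unfolding connected_graph_def W_def by blast
    have s: "successively (\<lambda>a b. {a,b} \<in> edges G') xs" and ne: "xs \<noteq> []" using xs(1) by (simp_all add: path_iff)
    show "same_part G' x y" unfolding same_part_def
    proof (intro allI impI)
      fix c' assume c': "proper_2col G' c'"
      have "c x = c y \<longleftrightarrow> even (length xs - 1)" using alt[OF c s ne] xs by simp
      moreover have "c' x = c' y \<longleftrightarrow> even (length xs - 1)" using alt[OF c' s ne] xs by simp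
      ultimately show "c' x = c' y" using cxy by simp
    qed
  qed
  have cons: "consistent B W c" unfolding consistent_def
  proof (intro allI impI)
    fix xs assume w: "wpath B W xs"
    show "pc c xs"
    proof (rule ccontr)
      assume npc: "\<not> pc c xs"
      have p: "is_path B xs" and h: "hd xs \<in> W" and l: "last xs \<in> W"
        and int: "\<forall>x\<in>set xs. x \<in> W \<longrightarrow> x = hd xs \<or> x = last xs" using w by (simp_all add: wpath_def)
      have d: "distinct xs" and ne: "xs \<noteq> []" using p by (simp_all add: path_iff)
      have int2: "\<forall>i. 0 < i \<and> Suc i < length xs \<longrightarrow> xs ! i \<notin> verts G'"
        using interior_iff[OF d ne, of W] int by (simp add: W_def)
      have spx: "same_part G' (hd xs) (last xs) \<longleftrightarrow> c (hd xs) = c (last xs)" using sp h l by blast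
      have "(same_part G' (hd xs) (last xs) \<and> odd (length xs - 1)) \<or>
            (\<not> same_part G' (hd xs) (last xs) \<and> even (length xs - 1))"
        using npc spx unfolding pc_def by blast
      then have "bad_path G' xs" using ne h l int2 unfolding bad_path_def W_def by blast
      then show False using nb p by blast
    qed
  qed
  have "\<not> (\<forall>a\<in>W. \<forall>b\<in>W. a = b)"
  proof
    assume "\<forall>a\<in>W. \<forall>b\<in>W. a = b"
    then have "card W \<le> Suc 0" using card_le_Suc0_iff_eq[OF finW] by blast
    then show False using card3 by simp
  qed
  then obtain a b where ab: "a \<in> W" "b \<in> W" "a \<noteq> b" by blast
  obtain d where "proper_2col B d" using main_ind[OF assms(6) WB ab cons] by blast
  then show False using assms(8) by (auto simp: bipartite_def)
qed

end
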